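(* Let $A$ be an arena and $\sigma$ a view function on $A$. Then its view closure $\overline{\sigma}$ is a strategy on $A$ (a non-empty set of even-length plays, closed under even-length prefixes, deterministic and uniform).
   Context: First-order variables are split into three disjoint countable sets: $\mathcal A$-variables, $\mathcal O$-variables (with a fixed enumeration $(o_i)_{i\in\mathbb N}$) and $\mathcal P$-variables. $\mathcal{AP}$-terms (resp. $\mathcal{OP}$-terms) are first-order terms built from $\mathcal A$- and $\mathcal P$-variables (resp. $\mathcal O$- and $\mathcal P$-variables). Arena: a finite forest whose nodes (moves) carry a first-order label (a list of $\mathcal A$-variables, all such variables in the arena being distinct) and an atomic label (a list of atomic formulas $X\,t_1\dots t_k$ whose $t_i$ are $\mathcal{AP}$-terms whose $\mathcal A$-variables occur in the first-order label of the node or of an ancestor). Polarity is depth parity: even = Opponent (O), odd = Player (P); roots are initial. Justified sequence: finite sequence of move occurrences; each non-initial occurrence has a $\lambda$-pointer to an earlier occurrence of its father; each element of the atomic label of an occurrence has at most one $\mu$-pointer to an element of the atomic label of an earlier occurrence of opposite polarity. Instantiations: each O-move occurrence carries an $\mathcal O$-instantiation (list of $\mathcal O$-variables of the length of its first-order label), each P-move occurrence a $\mathcal P$-instantiation (list of $\mathcal{OP}$-terms of that length); all $\mathcal O$-variables in $\mathcal O$-instantiations are distinct. For an occurrence $m$ with instantiation $[t_1..t_k]$ and first-order label $[x_1..x_k]$, $\theta_m=\{x_i\mapsto t_i\}$ if $m$ is initial, else $\theta_m=\theta_n\cup\{x_i\mapsto t_i\}$ with $n$ its $\lambda$-justifier.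 Play: an instantiated justified sequence with alternating polarities, no $\mu$-pointers from O-moves, exactly one $\mu$-pointer from each element of the atomic label of each P-move, every $\mu$-pointer from $X\,t_1..t_k$ at $m$ to $Y\,u_1..u_p$ at $n$ satisfying $X=Y$, $k=p$, $t_i\theta_m=u_i\theta_n$, and every $\mathcal O$-variable occurring in a $\mathcal P$-instantiation occurring in an earlier $\mathcal O$-instantiation. An $\mathcal O$-renaming is an injection $\varsigma$ of $\mathcal O$-variables into themselves; $s\varsigma$ replaces each $o$ by $\varsigma(o)$ in all instantiations. Strategy: non-empty set of even-length plays closed under even-length prefixes, deterministic ($sm,sn\in\sigma\Rightarrow sm=sn$, including pointers and instantiations) and uniform ($s\in\sigma\Rightarrow s\varsigma\in\sigma$ for every $\mathcal O$-renaming). View: a play in which each O-move occurrence other than the first is $\lambda$-justified by the immediately preceding move, and the concatenation (in order) of its $\mathcal O$-instantiations is a prefix of $(o_i)$. Pre-view: $\lceil\varepsilon\rceil=\varepsilon$; $\lceil sm\rceil=\lceil s\rceil m$ for P-moves $m$; $\lceil sm\rceil=m$ for initial $m$; $\lceil sm\,t\,n\rceil=\lceil sm\rceil n$ for an O-move $n$ justified by $m$. The view $\ulcorner s\urcorner$ is $\lceil s\rceil\varsigma$ where $\varsigma$ is an $\mathcal O$-renaming sending the $i$-th $\mathcal O$-variable played in $\lceil s\rceil$ to $o_i$. View function: non-empty set of even-length views closed under even-length prefixes and deterministic. View closure $\overline\sigma$: least set with $\varepsilon\in\overline\sigma$ and, if $s\in\overline\sigma$, $smn$ is a play and $\ulcorner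 smn\urcorner\in\sigma$, then $smn\in\overline\sigma$. *)

theory Defs
  imports Main
begin

text \<open>First-order variables: A-variables, O-variables (o_i = OV i) and P-variables.\<close>
datatype var = AV nat | OV nat | PV nat

datatype trm = Var var | Fn nat "trm list"

text \<open>Atomic formula X t1 .. tk : predicate symbol X (nat) with argument list.\<close>
type_synonym atom = "nat \<times> trm list"

fun A_var :: "var \<Rightarrow> bool" where
  "A_var (AV _) = True" | "A_var _ = False"
fun O_var :: "var \<Rightarrow> bool" where
  "O_var (OV _) = True" | "O_var _ = False"
fun P_var :: "var \<Rightarrow> bool" where
  "P_var (PV _) = True" | "P_var _ = False"

fun tvars :: "trm \<Rightarrow> var set" where
  "tvars (Var x) = {x}"
| "tvars (Fn f ts) = (\<Union>t\<in>set ts. tvars t)"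

definition AP_term :: "trm \<Rightarrow> bool" where
  "AP_term t \<longleftrightarrow> (\<forall>x\<in>tvars t. A_var x \<or> P_var x)"

definition OP_term :: "trm \<Rightarrow> bool" where
  "OP_term t \<longleftrightarrow> (\<forall>x\<in>tvars t. O_var x \<or> P_var x)"

fun subst :: "(var \<rightharpoonup> trm) \<Rightarrow> trm \<Rightarrow> trm" where
  "subst \<theta> (Var x) = (case \<theta> x of Some t \<Rightarrow> t | None \<Rightarrow> Var x)"
| "subst \<theta> (Fn f ts) = Fn f (map (subst \<theta>) ts)"

fun oren :: "(nat \<Rightarrow> nat) \<Rightarrow> trm \<Rightarrow> trm" where
  "oren \<zeta> (Var (OV i)) = Var (OV (\<zeta> i))"
| "oren \<zeta> (Var x) = Var x"
| "oren \<zeta> (Fn f ts) = Fn f (map (oren \<zeta>) ts)"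

record 'm arena =
  amoves :: "'m set"
  apar   :: "'m \<Rightarrow> 'm option"
  afol   :: "'m \<Rightarrow> var list"
  aatl   :: "'m \<Rightarrow> atom list"

inductive has_depth :: "'m arena \<Rightarrow> 'm \<Rightarrow> nat \<Rightarrow> bool" for A where
  root: "apar A m = None \<Longrightarrow> has_depth A m 0"
| step: "apar A m = Some n \<Longrightarrow> has_depth A n d \<Longrightarrow> has_depth A m (Suc d)"

definition O_move :: "'m arena \<Rightarrow> 'm \<Rightarrow> bool" where
  "O_move A m \<longleftrightarrow> (\<exists>d. has_depth A m d \<and> even d)"

definition ancestor_or_self :: "'m arena \<Rightarrow> 'm \<Rightarrow> 'm \<Rightarrow> bool" where
  "ancestor_or_self A m n \<longleftrightarrow> (\<lambda>x y. apar A x = Some y)\<^sup>*\<^sup>* m n"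

definition arena :: "'m arena \<Rightarrow> bool" where
  "arena A \<longleftrightarrow>
     finite (amoves A)
   \<and> (\<forall>m\<in>amoves A. \<forall>n. apar A m = Some n \<longrightarrow> n \<in> amoves A)
   \<and> (\<forall>m\<in>amoves A. \<exists>d. has_depth A m d)
   \<and> (\<forall>m\<in>amoves A. (\<forall>x\<in>set (afol A m). A_var x) \<and> distinct (afol A m))
   \<and> (\<forall>m\<in>amoves A. \<forall>m'\<in>amoves A. m \<noteq> m' \<longrightarrow> set (afol A m) \<inter> set (afol A m') = {})
   \<and> (\<forall>m\<in>amoves A. \<forall>a\<in>set (aatl A m). \<forall>t\<in>set (snd a).
        AP_term t \<and>
        (\<forall>x\<in>tvars t. A_var x \<longrightarrow> (\<exists>n. ancestor_or_self A m n \<and> x \<in> set (afol A n))))"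

text \<open>A move occurrence: the move, its lambda-pointer (index of an earlier occurrence),
  for each element of the atomic label an optional mu-pointer
  (index of earlier occurrence, index of atom in its atomic label), and its instantiation.\<close>
record 'm occ =
  omv  :: 'm
  olp  :: "nat option"
  omp  :: "(nat \<times> nat) option list"
  oins :: "trm list"

definition oinsts :: "'m arena \<Rightarrow> 'm occ list \<Rightarrow> trm list" where
  "oinsts A s = concat (map oins (filter (\<lambda>x. O_move A (omv x)) s))"

definition justified :: "'m arena \<Rightarrow> 'm occ list \<Rightarrow> bool" where
  "justified A s \<longleftrightarrow>
     (\<forall>i<length s.
        omv (s!i) \<in> amoves A
      \<and> (if apar A (omv (s!i)) = None then olp (s!i) = None
         else (\<exists>j<i. olp (s!i) = Some j \<and> apar A (omv (s!i)) = Some (omv (s!j))))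
      \<and> length (omp (s!i)) = length (aatl A (omv (s!i)))
      \<and> (\<forall>k<length (omp (s!i)). \<forall>j l. omp (s!i) ! k = Some (j, l) \<longrightarrow>
            j < i \<and> l < length (aatl A (omv (s!j)))
            \<and> O_move A (omv (s!j)) \<noteq> O_move A (omv (s!i)))
      \<and> length (oins (s!i)) = length (afol A (omv (s!i)))
      \<and> (if O_move A (omv (s!i)) then (\<forall>t\<in>set (oins (s!i)). \<exists>k. t = Var (OV k))
         else (\<forall>t\<in>set (oins (s!i)). OP_term t)))
   \<and> distinct (oinsts A s)"

text \<open>theta_m, computed along lambda-pointers (fuel suffices since pointers go strictly back).\<close>
primrec thaux :: "nat \<Rightarrow> 'm arena \<Rightarrow> 'm occ list \<Rightarrow> nat \<Rightarrow> (var \<rightharpoonup> trm)" where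
  "thaux 0 A s i = Map.empty"
| "thaux (Suc f) A s i =
     (case olp (s!i) of None \<Rightarrow> Map.empty | Some j \<Rightarrow> thaux f A s j)
     ++ map_of (zip (afol A (omv (s!i))) (oins (s!i)))"

definition theta :: "'m arena \<Rightarrow> 'm occ list \<Rightarrow> nat \<Rightarrow> (var \<rightharpoonup> trm)" where
  "theta A s i = thaux (Suc i) A s i"

definition play :: "'m arena \<Rightarrow> 'm occ list \<Rightarrow> bool" where
  "play A s \<longleftrightarrow>
     justified A s
   \<and> (\<forall>i. Suc i < length s \<longrightarrow> O_move A (omv (s!i)) \<noteq> O_move A (omv (s!Suc i)))
   \<and> (\<forall>i<length s. O_move A (omv (s!i)) \<longrightarrow> (\<forall>p\<in>set (omp (s!i)). p = None))
   \<and> (\<forall>i<length s. \<not> O_move A (omv (s!i)) \<longrightarrow> (\<forall>p\<in>set (omp (s!i)). p \<noteq> None))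
   \<and> (\<forall>i<length s. \<forall>k<length (omp (s!i)). \<forall>j l. omp (s!i) ! k = Some (j, l) \<longrightarrow>
        fst (aatl A (omv (s!i)) ! k) = fst (aatl A (omv (s!j)) ! l)
      \<and> length (snd (aatl A (omv (s!i)) ! k)) = length (snd (aatl A (omv (s!j)) ! l))
      \<and> map (subst (theta A s i)) (snd (aatl A (omv (s!i)) ! k))
          = map (subst (theta A s j)) (snd (aatl A (omv (s!j)) ! l)))
   \<and> (\<forall>i<length s. \<not> O_move A (omv (s!i)) \<longrightarrow>
        (\<forall>t\<in>set (oins (s!i)). \<forall>k. OV k \<in> tvars t \<longrightarrow>
           (\<exists>j<i. O_move A (omv (s!j)) \<and> Var (OV k) \<in> set (oins (s!j)))))"

definition oren_seq :: "(nat \<Rightarrow> nat) \<Rightarrow> 'm occ list \<Rightarrow> 'm occ list" where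
  "oren_seq \<zeta> s = map (\<lambda>x. x\<lparr>oins := map (oren \<zeta>) (oins x)\<rparr>) s"

definition strategy :: "'m arena \<Rightarrow> 'm occ list set \<Rightarrow> bool" where
  "strategy A \<sigma> \<longleftrightarrow>
     \<sigma> \<noteq> {}
   \<and> (\<forall>s\<in>\<sigma>. play A s \<and> even (length s))
   \<and> (\<forall>s\<in>\<sigma>. \<forall>n. even n \<and> n \<le> length s \<longrightarrow> take n s \<in> \<sigma>)
   \<and> (\<forall>s m n. s @ [m] \<in> \<sigma> \<and> s @ [n] \<in> \<sigma> \<longrightarrow> m = n)
   \<and> (\<forall>\<zeta> s. inj \<zeta> \<and> s \<in> \<sigma> \<longrightarrow> oren_seq \<zeta> s \<in> \<sigma>)"

definition is_view :: "'m arena \<Rightarrow> 'm occ list \<Rightarrow> bool" where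
  "is_view A s \<longleftrightarrow>
     play A s
   \<and> (\<forall>i<length s. 0 < i \<and> O_move A (omv (s!i)) \<longrightarrow> olp (s!i) = Some (i - 1))
   \<and> oinsts A s = map (\<lambda>i. Var (OV i)) [0..<length (oinsts A s)]"

definition view_function :: "'m arena \<Rightarrow> 'm occ list set \<Rightarrow> bool" where
  "view_function A \<sigma> \<longleftrightarrow>
     \<sigma> \<noteq> {}
   \<and> (\<forall>s\<in>\<sigma>. is_view A s \<and> even (length s))
   \<and> (\<forall>s\<in>\<sigma>. \<forall>n. even n \<and> n \<le> length s \<longrightarrow> take n s \<in> \<sigma>)
   \<and> (\<forall>s m n. s @ [m] \<in> \<sigma> \<and> s @ [n] \<in> \<sigma> \<longrightarrow> m = n)"

text \<open>Indices (in s) of the occurrences forming the pre-view of the prefix of length n.\<close>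
primrec pvaux :: "nat \<Rightarrow> 'm arena \<Rightarrow> 'm occ list \<Rightarrow> nat \<Rightarrow> nat list" where
  "pvaux 0 A s n = []"
| "pvaux (Suc f) A s n =
     (case n of 0 \<Rightarrow> []
      | Suc k \<Rightarrow>
          if \<not> O_move A (omv (s!k)) then pvaux f A s k @ [k]
          else if apar A (omv (s!k)) = None then [k]
          else (case olp (s!k) of
                  Some j \<Rightarrow> if j < k then pvaux f A s (Suc j) @ [k] else [k]
                | None \<Rightarrow> [k]))"

definition pos :: "nat list \<Rightarrow> nat \<Rightarrow> nat" where
  "pos I j = length (takeWhile (\<lambda>x. x \<noteq> j) I)"

text \<open>Re-indexing pointers into the subsequence given by I; pointers to removed
  occurrences become absent (so the result is then not a justified sequence).\<close>
definition reidx :: "nat list \<Rightarrow> 'm occ \<Rightarrow> 'm occ" where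
  "reidx I x = x\<lparr>olp := (case olp x of None \<Rightarrow> None
                           | Some j \<Rightarrow> if j \<in> set I then Some (pos I j) else None),
                 omp := map (\<lambda>p. case p of None \<Rightarrow> None
                           | Some (j, l) \<Rightarrow> if j \<in> set I then Some (pos I j, l) else None) (omp x)\<rparr>"

definition subseq_at :: "'m occ list \<Rightarrow> nat list \<Rightarrow> 'm occ list" where
  "subseq_at s I = map (\<lambda>i. reidx I (s!i)) I"

definition preview :: "'m arena \<Rightarrow> 'm occ list \<Rightarrow> 'm occ list" where
  "preview A s = subseq_at s (pvaux (length s) A s (length s))"

definition oidx :: "'m arena \<Rightarrow> 'm occ list \<Rightarrow> nat list" where
  "oidx A s = map (\<lambda>t. case t of Var (OV k) \<Rightarrow> k | _ \<Rightarrow> 0) (oinsts A s)"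

text \<open>An O-renaming sending the i-th O-variable played to o_i (injective whenever these
  variables are distinct, as they are in a play).\<close>
definition view_ren :: "nat list \<Rightarrow> nat \<Rightarrow> nat" where
  "view_ren vs x = (if x \<in> set vs then pos vs x else length vs + x)"

definition view_of :: "'m arena \<Rightarrow> 'm occ list \<Rightarrow> 'm occ list" where
  "view_of A s = oren_seq (view_ren (oidx A (preview A s))) (preview A s)"

inductive_set vclos :: "'m arena \<Rightarrow> 'm occ list set \<Rightarrow> 'm occ list set"
  for A :: "'m arena" and \<sigma> :: "'m occ list set" where
  empty: "[] \<in> vclos A \<sigma>"
| ext: "s \<in> vclos A \<sigma> \<Longrightarrow> play A (s @ [m, n]) \<Longrightarrow> view_of A (s @ [m, n]) \<in> \<sigma>
        \<Longrightarrow> s @ [m, n] \<in> vclos A \<sigma>"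

end

theory Submission
  imports Defs
begin

fun vren :: "(nat \<Rightarrow> nat) \<Rightarrow> var \<Rightarrow> var" where
  "vren z (OV k) = OV (z k)" | "vren z x = x"

lemma oren_Var[simp]: "oren z (Var x) = Var (vren z x)"
  by (cases x) auto

lemma vren_inj: "inj z \<Longrightarrow> vren z x = vren z y \<Longrightarrow> x = y"
  by (cases x; cases y) (auto dest: injD)

lemma tvars_oren: "tvars (oren z t) = vren z ` tvars t"
  by (induction t) auto

lemma oren_inj: "inj z \<Longrightarrow> oren z t = oren z u \<Longrightarrow> t = u"
proof (induction t arbitrary: u)
  case (Var x)
  then show ?case by (cases u) (auto dest: vren_inj)
next
  case (Fn f ts)
  then show ?case
    by (cases u) (auto simp: list_eq_iff_nth_eq dest!: nth_mem)
qed

lemma oren_comp: "oren f (oren g t) = oren (f \<circ> g) t"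
proof (induction t)
  case (Var x) then show ?case by (cases x) auto
qed auto

lemma oren_cong: "(\<And>k. OV k \<in> tvars t \<Longrightarrow> f k = g k) \<Longrightarrow> oren f t = oren g t"
proof (induction t)
  case (Var x) then show ?case by (cases x) auto
qed auto

lemma subst_oren: "(\<forall>x\<in>tvars t. \<not> O_var x) \<Longrightarrow>
   subst (map_option (oren z) \<circ> th) t = oren z (subst th t)"
proof (induction t)
  case (Var x) then show ?case by (cases "th x"; cases x) auto
qed auto

lemma length_oren_seq[simp]: "length (oren_seq z s) = length s"
  by (simp add: oren_seq_def)

lemma nth_oren_seq[simp]: "i < length s \<Longrightarrow> oren_seq z s ! i = (s!i)\<lparr>oins := map (oren z) (oins (s!i))\<rparr>"
  by (simp add: oren_seq_def)

lemma oren_seq_append[simp]: "oren_seq z (s @ t) = oren_seq z s @ oren_seq z t"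
  by (simp add: oren_seq_def)

lemma oren_seq_Cons[simp]: "oren_seq z (x # t) = x\<lparr>oins := map (oren z) (oins x)\<rparr> # oren_seq z t"
  by (simp add: oren_seq_def)

lemma oren_seq_Nil[simp]: "oren_seq z [] = []"
  by (simp add: oren_seq_def)

lemma oinsts_oren_seq: "oinsts A (oren_seq z s) = map (oren z) (oinsts A s)"
  by (induction s) (auto simp: oinsts_def)

lemma thaux_oren:
  assumes "\<forall>i<length s. \<forall>j. olp (s!i) = Some j \<longrightarrow> j < i"
  shows "i < length s \<Longrightarrow> thaux f A (oren_seq z s) i = map_option (oren z) \<circ> thaux f A s i"
proof (induction f arbitrary: i)
  case 0 then show ?case by (auto simp: fun_eq_iff)
next
  case (Suc f)
  have Z: "map_of (zip xs (map (oren z) ys)) = map_option (oren z) \<circ> map_of (zip xs ys)" for xs ys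
    by (simp add: zip_map2 map_of_map[symmetric] case_prod_beta)
  have IH: "(case olp (s!i) of None \<Rightarrow> Map.empty | Some j \<Rightarrow> thaux f A (oren_seq z s) j)
      = map_option (oren z) \<circ> (case olp (s!i) of None \<Rightarrow> Map.empty | Some j \<Rightarrow> thaux f A s j)"
    using Suc assms by (auto split: option.split simp: fun_eq_iff)
  show ?case using Suc.prems
    by (simp add: IH Z fun_eq_iff map_add_def split: option.split)
qed

lemma theta_oren:
  assumes "\<forall>i<length s. \<forall>j. olp (s!i) = Some j \<longrightarrow> j < i" "i < length s"
  shows "theta A (oren_seq z s) i = map_option (oren z) \<circ> theta A s i"
  using thaux_oren[OF assms] by (simp add: theta_def)

lemma justified_back: "justified A s \<Longrightarrow> \<forall>i<length s. \<forall>j. olp (s!i) = Some j \<longrightarrow> j < i"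
  unfolding justified_def by (metis option.distinct(1) option.inject)

lemma O_var_vren: "O_var (vren z x) = O_var x" "P_var (vren z x) = P_var x"
  by (cases x; simp)+

lemma OP_term_oren: "OP_term t \<Longrightarrow> OP_term (oren z t)"
  by (auto simp: OP_term_def tvars_oren O_var_vren)

lemma OV_in_oren: "OV k \<in> tvars (oren z t) \<Longrightarrow> \<exists>k'. k = z k' \<and> OV k' \<in> tvars t"
proof -
  assume "OV k \<in> tvars (oren z t)"
  then obtain x where "x \<in> tvars t" "OV k = vren z x" by (auto simp: tvars_oren)
  then show ?thesis by (cases x) auto
qed

definition jcond :: "'m arena \<Rightarrow> 'm occ list \<Rightarrow> nat \<Rightarrow> bool" where
 "jcond A s i \<longleftrightarrow> omv (s!i) \<in> amoves A
      \<and> (if apar A (omv (s!i)) = None then olp (s!i) = None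
         else (\<exists>j<i. olp (s!i) = Some j \<and> apar A (omv (s!i)) = Some (omv (s!j))))
      \<and> length (omp (s!i)) = length (aatl A (omv (s!i)))
      \<and> (\<forall>k<length (omp (s!i)). \<forall>j l. omp (s!i) ! k = Some (j, l) \<longrightarrow>
            j < i \<and> l < length (aatl A (omv (s!j)))
            \<and> O_move A (omv (s!j)) \<noteq> O_move A (omv (s!i)))
      \<and> length (oins (s!i)) = length (afol A (omv (s!i)))
      \<and> (if O_move A (omv (s!i)) then (\<forall>t\<in>set (oins (s!i)). \<exists>k. t = Var (OV k))
         else (\<forall>t\<in>set (oins (s!i)). OP_term t))"

lemma justified_alt: "justified A s \<longleftrightarrow> (\<forall>i<length s. jcond A s i) \<and> distinct (oinsts A s)"
  unfolding justified_def jcond_def by (rule refl)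
lemma justified_nth:
  assumes "justified A s" "i < length s"
  shows "omv (s!i) \<in> amoves A"
      "(if apar A (omv (s!i)) = None then olp (s!i) = None
         else (\<exists>j<i. olp (s!i) = Some j \<and> apar A (omv (s!i)) = Some (omv (s!j))))"
      "length (omp (s!i)) = length (aatl A (omv (s!i)))"
      "(\<forall>k<length (omp (s!i)). \<forall>j l. omp (s!i) ! k = Some (j, l) \<longrightarrow>
            j < i \<and> l < length (aatl A (omv (s!j)))
            \<and> O_move A (omv (s!j)) \<noteq> O_move A (omv (s!i)))"
      "length (oins (s!i)) = length (afol A (omv (s!i)))"
      "(if O_move A (omv (s!i)) then (\<forall>t\<in>set (oins (s!i)). \<exists>k. t = Var (OV k))
         else (\<forall>t\<in>set (oins (s!i)). OP_term t))"
proof -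
  have h: "jcond A s i" using assms unfolding justified_alt by blast
  show "omv (s!i) \<in> amoves A" by (rule h[unfolded jcond_def, THEN conjunct1])
  show "(if apar A (omv (s!i)) = None then olp (s!i) = None
         else (\<exists>j<i. olp (s!i) = Some j \<and> apar A (omv (s!i)) = Some (omv (s!j))))"
    by (rule h[unfolded jcond_def, THEN conjunct2, THEN conjunct1])
  show "length (omp (s!i)) = length (aatl A (omv (s!i)))"
    by (rule h[unfolded jcond_def, THEN conjunct2, THEN conjunct2, THEN conjunct1])
  show "(\<forall>k<length (omp (s!i)). \<forall>j l. omp (s!i) ! k = Some (j, l) \<longrightarrow>
            j < i \<and> l < length (aatl A (omv (s!j)))
            \<and> O_move A (omv (s!j)) \<noteq> O_move A (omv (s!i)))"
    by (rule h[unfolded jcond_def, THEN conjunct2, THEN conjunct2, THEN conjunct2, THEN conjunct1])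
  show "length (oins (s!i)) = length (afol A (omv (s!i)))"
    by (rule h[unfolded jcond_def, THEN conjunct2, THEN conjunct2, THEN conjunct2, THEN conjunct2, THEN conjunct1])
  show "(if O_move A (omv (s!i)) then (\<forall>t\<in>set (oins (s!i)). \<exists>k. t = Var (OV k))
         else (\<forall>t\<in>set (oins (s!i)). OP_term t))"
    by (rule h[unfolded jcond_def, THEN conjunct2, THEN conjunct2, THEN conjunct2, THEN conjunct2, THEN conjunct2])
qed

lemma justified_oren:
  assumes "justified A s" "inj z"
  shows "justified A (oren_seq z s)"
proof -
  have d: "distinct (oinsts A s)" using assms unfolding justified_alt by blast
  have inj: "inj (oren z)" using assms(2) by (meson injI oren_inj)
  have "distinct (oinsts A (oren_seq z s))"
    unfolding oinsts_oren_seq distinct_map using d inj_on_subset[OF inj subset_UNIV] by blast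
  moreover
  { fix i assume i: "i < length s"
    have e: "\<And>j. j < i \<Longrightarrow> omv (oren_seq z s ! j) = omv (s!j)" using i by simp
    note h = justified_nth[OF assms(1) i]
    have "(\<forall>k<length (omp (s!i)). \<forall>j l. omp (s!i) ! k = Some (j, l) \<longrightarrow>
            j < i \<and> l < length (aatl A (omv (oren_seq z s!j)))
            \<and> O_move A (omv (oren_seq z s!j)) \<noteq> O_move A (omv (s!i)))"
    proof (intro allI impI)
      fix k j l assume a: "k<length (omp (s!i))" "omp (s!i) ! k = Some (j, l)"
      show "j < i \<and> l < length (aatl A (omv (oren_seq z s!j)))
            \<and> O_move A (omv (oren_seq z s!j)) \<noteq> O_move A (omv (s!i))"
      proof -
        have "j < i \<and> l < length (aatl A (omv (s!j)))
            \<and> O_move A (omv (s!j)) \<noteq> O_move A (omv (s!i))" using h(4) a by blast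
        then show ?thesis using e[of j] by simp
      qed
    qed
    moreover have "(if apar A (omv (s!i)) = None then olp (s!i) = None
         else (\<exists>j<i. olp (s!i) = Some j \<and> apar A (omv (s!i)) = Some (omv (oren_seq z s!j))))"
    proof (cases "apar A (omv (s!i)) = None")
      case True then show ?thesis using h(2) by simp
    next
      case False
      then obtain j where "j<i" "olp (s!i) = Some j" "apar A (omv (s!i)) = Some (omv (s!j))"
        using h(2) by auto
      then show ?thesis using False e[of j] by auto
    qed
    moreover have "(if O_move A (omv (s!i)) then (\<forall>t\<in>set (map (oren z) (oins (s!i))). \<exists>k. t = Var (OV k))
         else (\<forall>t\<in>set (map (oren z) (oins (s!i))). OP_term t))"
      using h(6) by (auto simp: OP_term_oren split: if_splits)
    ultimately have "jcond A (oren_seq z s) i" unfolding jcond_def using h i by simp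
  }
  ultimately show ?thesis unfolding justified_alt by simp
qed

lemma arena_atom_noO:
  assumes "arena A" "m \<in> amoves A" "k < length (aatl A m)" "t \<in> set (snd (aatl A m ! k))"
  shows "\<forall>x\<in>tvars t. \<not> O_var x"
proof -
  have "\<forall>m\<in>amoves A. \<forall>a\<in>set (aatl A m). \<forall>t\<in>set (snd a). AP_term t"
    using assms(1) unfolding arena_def by blast
  then have "AP_term t" using assms(2-4) by (meson nth_mem)
  then show ?thesis unfolding AP_term_def by (metis A_var.elims(2) O_var.simps(2) O_var.simps(3) P_var.elims(2))
qed

lemma play_parts:
  assumes "play A s"
  shows "justified A s"
   "\<forall>i. Suc i < length s \<longrightarrow> O_move A (omv (s!i)) \<noteq> O_move A (omv (s!Suc i))"
   "\<forall>i<length s. O_move A (omv (s!i)) \<longrightarrow> (\<forall>p\<in>set (omp (s!i)). p = None)"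
   "\<forall>i<length s. \<not> O_move A (omv (s!i)) \<longrightarrow> (\<forall>p\<in>set (omp (s!i)). p \<noteq> None)"
   "\<forall>i<length s. \<forall>k<length (omp (s!i)). \<forall>j l. omp (s!i) ! k = Some (j, l) \<longrightarrow>
        fst (aatl A (omv (s!i)) ! k) = fst (aatl A (omv (s!j)) ! l)
      \<and> length (snd (aatl A (omv (s!i)) ! k)) = length (snd (aatl A (omv (s!j)) ! l))
      \<and> map (subst (theta A s i)) (snd (aatl A (omv (s!i)) ! k))
          = map (subst (theta A s j)) (snd (aatl A (omv (s!j)) ! l))"
   "\<forall>i<length s. \<not> O_move A (omv (s!i)) \<longrightarrow>
        (\<forall>t\<in>set (oins (s!i)). \<forall>k. OV k \<in> tvars t \<longrightarrow>
           (\<exists>j<i. O_move A (omv (s!j)) \<and> Var (OV k) \<in> set (oins (s!j))))"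
  using assms unfolding play_def by simp_all

lemma play_Ovar:
  assumes "play A s" "i < length s" "\<not> O_move A (omv (s!i))" "t \<in> set (oins (s!i))" "OV k \<in> tvars t"
  shows "\<exists>j<i. O_move A (omv (s!j)) \<and> Var (OV k) \<in> set (oins (s!j))"
  using play_parts(6)[OF assms(1)] assms(2-5) by blast

lemma play_oren:
  assumes ar: "arena A" and p: "play A s" and z: "inj z"
  shows "play A (oren_seq z s)"
proof -
  have j: "justified A s" using play_parts(1)[OF p] .
  have bk: "\<forall>i<length s. \<forall>j. olp (s!i) = Some j \<longrightarrow> j < i" using justified_back[OF j] .
  have th: "\<And>i. i < length s \<Longrightarrow> theta A (oren_seq z s) i = map_option (oren z) \<circ> theta A s i"
    using theta_oren[OF bk] by blast
  have c5: "\<forall>i<length (oren_seq z s). \<forall>k<length (omp (oren_seq z s!i)). \<forall>j l. omp (oren_seq z s!i) ! k = Some (j, l) \<longrightarrow>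
        fst (aatl A (omv (oren_seq z s!i)) ! k) = fst (aatl A (omv (oren_seq z s!j)) ! l)
      \<and> length (snd (aatl A (omv (oren_seq z s!i)) ! k)) = length (snd (aatl A (omv (oren_seq z s!j)) ! l))
      \<and> map (subst (theta A (oren_seq z s) i)) (snd (aatl A (omv (oren_seq z s!i)) ! k))
          = map (subst (theta A (oren_seq z s) j)) (snd (aatl A (omv (oren_seq z s!j)) ! l))"
  proof (intro allI impI)
    fix i k j l assume i': "i < length (oren_seq z s)" and k': "k < length (omp (oren_seq z s!i))"
      and e': "omp (oren_seq z s!i) ! k = Some (j, l)"
    have i: "i < length s" using i' by simp
    have k: "k < length (omp (s!i))" using k' i by simp
    have e: "omp (s!i) ! k = Some (j, l)" using e' i by simp
    have ji: "j < i" "l < length (aatl A (omv (s!j)))"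
      using justified_nth(4)[OF j i] k e by blast+
    have jl: "j < length s" using ji i by simp
    have mi: "omv (s!i) \<in> amoves A" using justified_nth(1)[OF j i] .
    have mj: "omv (s!j) \<in> amoves A" using justified_nth(1)[OF j jl] .
    have ka: "k < length (aatl A (omv (s!i)))" using justified_nth(3)[OF j i] k by simp
    have oo: "fst (aatl A (omv (s!i)) ! k) = fst (aatl A (omv (s!j)) ! l)
      \<and> length (snd (aatl A (omv (s!i)) ! k)) = length (snd (aatl A (omv (s!j)) ! l))
      \<and> map (subst (theta A s i)) (snd (aatl A (omv (s!i)) ! k))
          = map (subst (theta A s j)) (snd (aatl A (omv (s!j)) ! l))"
      using play_parts(5)[OF p] i k e by blast
    have "map (subst (theta A (oren_seq z s) i)) (snd (aatl A (omv (s!i)) ! k))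
        = map (oren z) (map (subst (theta A s i)) (snd (aatl A (omv (s!i)) ! k)))"
      using th[OF i] arena_atom_noO[OF ar mi ka] by (simp add: subst_oren)
    also have "\<dots> = map (oren z) (map (subst (theta A s j)) (snd (aatl A (omv (s!j)) ! l)))"
      using oo by simp
    also have "\<dots> = map (subst (theta A (oren_seq z s) j)) (snd (aatl A (omv (s!j)) ! l))"
      using th[OF jl] arena_atom_noO[OF ar mj ji(2)] by (simp add: subst_oren)
    finally show "fst (aatl A (omv (oren_seq z s!i)) ! k) = fst (aatl A (omv (oren_seq z s!j)) ! l)
      \<and> length (snd (aatl A (omv (oren_seq z s!i)) ! k)) = length (snd (aatl A (omv (oren_seq z s!j)) ! l))
      \<and> map (subst (theta A (oren_seq z s) i)) (snd (aatl A (omv (oren_seq z s!i)) ! k))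
          = map (subst (theta A (oren_seq z s) j)) (snd (aatl A (omv (oren_seq z s!j)) ! l))"
      using oo i jl by simp
  qed
  have c6: "\<forall>i<length (oren_seq z s). \<not> O_move A (omv (oren_seq z s!i)) \<longrightarrow>
        (\<forall>t\<in>set (oins (oren_seq z s!i)). \<forall>k. OV k \<in> tvars t \<longrightarrow>
           (\<exists>j<i. O_move A (omv (oren_seq z s!j)) \<and> Var (OV k) \<in> set (oins (oren_seq z s!j))))"
  proof (intro allI impI ballI)
    fix i t k assume i': "i < length (oren_seq z s)" and nO': "\<not> O_move A (omv (oren_seq z s!i))"
      and t': "t \<in> set (oins (oren_seq z s!i))" and ok: "OV k \<in> tvars t"
    have i: "i < length s" using i' by simp
    have nO: "\<not> O_move A (omv (s!i))" using nO' i by simp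
    have t: "t \<in> oren z ` set (oins (s!i))" using t' i by simp
    obtain t0 where t0: "t0 \<in> set (oins (s!i))" "t = oren z t0" using t by blast
    obtain k0 where k0: "k = z k0" "OV k0 \<in> tvars t0" using OV_in_oren ok t0 by blast
    obtain j where jj: "j < i" "O_move A (omv (s!j))" "Var (OV k0) \<in> set (oins (s!j))"
      using play_Ovar[OF p i nO t0(1) k0(2)] by blast
    have jl: "j < length s" using jj i by simp
    have "Var (OV k) \<in> oren z ` set (oins (s!j))"
      using jj(3) k0(1) by (metis image_eqI oren_Var vren.simps(1))
    then show "\<exists>j<i. O_move A (omv (oren_seq z s!j)) \<and> Var (OV k) \<in> set (oins (oren_seq z s!j))"
      using jj jl by auto
  qed
  have jz: "justified A (oren_seq z s)" using justified_oren[OF j z] .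
  have c2: "\<forall>i. Suc i < length (oren_seq z s) \<longrightarrow> O_move A (omv (oren_seq z s!i)) \<noteq> O_move A (omv (oren_seq z s!Suc i))"
    using play_parts(2)[OF p] by simp
  have c3: "\<forall>i<length (oren_seq z s). O_move A (omv (oren_seq z s!i)) \<longrightarrow> (\<forall>p\<in>set (omp (oren_seq z s!i)). p = None)"
    using play_parts(3)[OF p] by simp
  have c4: "\<forall>i<length (oren_seq z s). \<not> O_move A (omv (oren_seq z s!i)) \<longrightarrow> (\<forall>p\<in>set (omp (oren_seq z s!i)). p \<noteq> None)"
    using play_parts(4)[OF p] by simp
  show ?thesis unfolding play_def
    by (intro conjI jz c2 c3 c4 c5 c6)
qed

lemma pvaux_bound: "i \<in> set (pvaux f A s n) \<Longrightarrow> i < n"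
proof (induction f arbitrary: n i)
  case 0 then show ?case by simp
next
  case (Suc f)
  show ?case
  proof (cases n)
    case 0 then show ?thesis using Suc.prems by simp
  next
    case (Suc k)
    then show ?thesis using Suc.prems Suc.IH
      by (auto split: if_splits option.splits) (fastforce+)
  qed
qed

lemma pvaux_cong:
  "(\<And>k. k < n \<Longrightarrow> omv (s!k) = omv (t!k) \<and> olp (s!k) = olp (t!k)) \<Longrightarrow> pvaux f A s n = pvaux f A t n"
proof (induction f arbitrary: n)
  case 0 then show ?case by simp
next
  case (Suc f)
  show ?case
  proof (cases n)
    case 0 then show ?thesis by simp
  next
    case (Suc k)
    have a: "omv (s!k) = omv (t!k)" "olp (s!k) = olp (t!k)" using Suc.prems Suc by auto
    have b: "pvaux f A s k = pvaux f A t k" using Suc.IH Suc.prems Suc by simp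
    have c: "j < k \<Longrightarrow> pvaux f A s (Suc j) = pvaux f A t (Suc j)" for j
      using Suc.IH Suc.prems Suc by simp
    show ?thesis using a b c Suc by (auto split: option.split)
  qed
qed

definition rp :: "nat list \<Rightarrow> (nat \<times> nat) option \<Rightarrow> (nat \<times> nat) option" where
  "rp I p = (case p of None \<Rightarrow> None | Some (j, l) \<Rightarrow> if j \<in> set I then Some (pos I j, l) else None)"

lemma reidx_sel[simp]:
  "omv (reidx I x) = omv x" "oins (reidx I x) = oins x"
  "omp (reidx I x) = map (rp I) (omp x)"
  "olp (reidx I x) = (case olp x of None \<Rightarrow> None | Some j \<Rightarrow> if j \<in> set I then Some (pos I j) else None)"
  by (simp_all add: reidx_def rp_def)

lemma reidx_oins_upd: "reidx I (x\<lparr>oins := v\<rparr>) = (reidx I x)\<lparr>oins := v\<rparr>"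
  by (simp add: reidx_def)

lemma preview_oren: "preview A (oren_seq z s) = oren_seq z (preview A s)"
proof -
  let ?I = "pvaux (length s) A s (length s)"
  have I: "pvaux (length s) A (oren_seq z s) (length s) = ?I"
    by (rule pvaux_cong) simp
  have "i \<in> set ?I \<Longrightarrow> i < length s" for i by (rule pvaux_bound)
  then show ?thesis
    unfolding preview_def subseq_at_def oren_seq_def[of z "map _ _"] using I
    by (simp add: reidx_oins_upd)
qed

lemma set_oinsts: "t \<in> set (oinsts A xs) \<longleftrightarrow> (\<exists>x\<in>set xs. O_move A (omv x) \<and> t \<in> set (oins x))"
  by (auto simp: oinsts_def)

lemma set_preview: "x \<in> set (preview A s) \<Longrightarrow> \<exists>i<length s. omv x = omv (s!i) \<and> oins x = oins (s!i)"
  unfolding preview_def subseq_at_def using pvaux_bound by fastforce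

lemma pos_less: "k \<in> set vs \<Longrightarrow> pos vs k < length vs"
  by (induction vs) (auto simp: pos_def)

lemma pos_nth: "k \<in> set vs \<Longrightarrow> vs ! pos vs k = k"
  by (induction vs) (auto simp: pos_def)

lemma pos_map: "inj z \<Longrightarrow> pos (map z vs) (z k) = pos vs k"
proof -
  assume "inj z"
  then have "(\<lambda>x. x \<noteq> z k) \<circ> z = (\<lambda>x. x \<noteq> k)" by (auto simp: inj_eq)
  then show ?thesis unfolding pos_def by (simp add: takeWhile_map)
qed

lemma view_ren_inj: "inj (view_ren vs)"
proof (rule injI)
  fix x y assume "view_ren vs x = view_ren vs y"
  then show "x = y" unfolding view_ren_def
    by (metis add_diff_cancel_left' le_add1 not_less pos_less pos_nth)
qed

lemma oren_seq_comp: "oren_seq f (oren_seq g s) = oren_seq (f \<circ> g) s"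
  by (simp add: oren_seq_def oren_comp comp_def)

lemma oren_seq_cong:
  "(\<And>x t k. x \<in> set s \<Longrightarrow> t \<in> set (oins x) \<Longrightarrow> OV k \<in> tvars t \<Longrightarrow> f k = g k) \<Longrightarrow> oren_seq f s = oren_seq g s"
proof -
  assume a: "\<And>x t k. x \<in> set s \<Longrightarrow> t \<in> set (oins x) \<Longrightarrow> OV k \<in> tvars t \<Longrightarrow> f k = g k"
  have h: "x \<in> set s \<Longrightarrow> map (oren f) (oins x) = map (oren g) (oins x)" for x
    by (rule map_cong[OF refl], rule oren_cong, rule a) auto
  show ?thesis unfolding oren_seq_def by (rule map_cong) (simp_all add: h)
qed

lemma view_of_oren:
  assumes vf: "view_function A \<sigma>" and j: "justified A s" and v: "view_of A s \<in> \<sigma>" and z: "inj z"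
  shows "view_of A (oren_seq z s) = view_of A s"
proof -
  define P where "P = preview A s"
  define vs where "vs = oidx A P"
  define \<rho> where "\<rho> = view_ren vs"
  have V: "view_of A s = oren_seq \<rho> P" unfolding view_of_def P_def vs_def \<rho>_def ..
  have isv: "is_view A (oren_seq \<rho> P)" using vf v V unfolding view_function_def by auto
  have pV: "play A (oren_seq \<rho> P)" using isv unfolding is_view_def by blast
  have oV: "oinsts A (oren_seq \<rho> P) = map (\<lambda>i. Var (OV i)) [0..<length (oinsts A (oren_seq \<rho> P))]"
    using isv unfolding is_view_def by blast
  have allO: "\<And>t. t \<in> set (oinsts A P) \<Longrightarrow> \<exists>k. t = Var (OV k)"
  proof -
    fix t assume "t \<in> set (oinsts A P)"
    then obtain x where x: "x \<in> set P" "O_move A (omv x)" "t \<in> set (oins x)" using set_oinsts by metis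
    obtain i where i: "i < length s" "omv x = omv (s!i)" "oins x = oins (s!i)"
      using set_preview x(1) unfolding P_def by blast
    show "\<exists>k. t = Var (OV k)" using justified_nth(6)[OF j i(1)] x i by auto
  qed
  have lvs: "length vs = length (oinsts A P)" unfolding vs_def oidx_def by simp
  have C: "k \<in> set vs" if x: "x \<in> set P" and t: "t \<in> set (oins x)" and ok: "OV k \<in> tvars t" for x t k
  proof (cases "O_move A (omv x)")
    case True
    then have "t \<in> set (oinsts A P)" using set_oinsts x t by metis
    moreover then obtain k' where "t = Var (OV k')" using allO by blast
    ultimately show ?thesis using ok unfolding vs_def oidx_def by force
  next
    case False
    obtain i where i: "i < length P" "P ! i = x" using x by (meson in_set_conv_nth)
    have i': "i < length (oren_seq \<rho> P)" using i by simp
    have nO: "\<not> O_move A (omv (oren_seq \<rho> P ! i))" using False i by simp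
    have t': "oren \<rho> t \<in> set (oins (oren_seq \<rho> P ! i))" using t i by simp
    have ok': "OV (\<rho> k) \<in> tvars (oren \<rho> t)" using ok by (force simp: tvars_oren)
    obtain j where jj: "j < i" "O_move A (omv (oren_seq \<rho> P ! j))" "Var (OV (\<rho> k)) \<in> set (oins (oren_seq \<rho> P ! j))"
      using play_Ovar[OF pV i' nO t' ok'] by blast
    have "oren_seq \<rho> P ! j \<in> set (oren_seq \<rho> P)" using jj(1) i' by (intro nth_mem) simp
    then have "Var (OV (\<rho> k)) \<in> set (oinsts A (oren_seq \<rho> P))" using set_oinsts jj by metis
    then have "\<rho> k < length (oinsts A (oren_seq \<rho> P))" by (subst (asm) oV) auto
    then have "\<rho> k < length vs" using lvs by (simp add: oinsts_oren_seq)
    then show ?thesis unfolding \<rho>_def view_ren_def by (auto split: if_splits)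
  qed
  have pz: "preview A (oren_seq z s) = oren_seq z P" unfolding P_def by (rule preview_oren)
  have oz: "oidx A (oren_seq z P) = map z vs"
    unfolding vs_def oidx_def oinsts_oren_seq map_map
  proof (rule map_cong[OF refl])
    fix x assume "x \<in> set (oinsts A P)"
    then obtain k where "x = Var (OV k)" using allO by blast
    then show "((\<lambda>t. case t of Var (OV k) \<Rightarrow> k | _ \<Rightarrow> 0) \<circ> oren z) x = (z \<circ> (\<lambda>t. case t of Var (OV k) \<Rightarrow> k | _ \<Rightarrow> 0)) x"
      by simp
  qed
  have "view_of A (oren_seq z s) = oren_seq (view_ren (map z vs)) (oren_seq z P)"
    unfolding view_of_def pz oz ..
  also have "\<dots> = oren_seq (view_ren (map z vs) \<circ> z) P" by (rule oren_seq_comp)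
  also have "\<dots> = oren_seq \<rho> P"
  proof (rule oren_seq_cong)
    fix x t k assume "x \<in> set P" "t \<in> set (oins x)" "OV k \<in> tvars t"
    then have "k \<in> set vs" by (rule C)
    then show "(view_ren (map z vs) \<circ> z) k = \<rho> k"
      unfolding \<rho>_def view_ren_def using pos_map[OF z] by simp
  qed
  finally show ?thesis using V by simp
qed

lemma play_Nil: "play A []"
  by (simp add: play_def justified_def oinsts_def)

lemma vclos_play: "s \<in> vclos A \<sigma> \<Longrightarrow> play A s \<and> even (length s)"
  by (induction rule: vclos.induct) (auto simp: play_Nil)

lemma vclos_take: "s \<in> vclos A \<sigma> \<Longrightarrow> even k \<Longrightarrow> k \<le> length s \<Longrightarrow> take k s \<in> vclos A \<sigma>"
proof (induction arbitrary: k rule: vclos.induct)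
  case empty then show ?case by (simp add: vclos.empty)
next
  case (ext s m n)
  have es: "even (length s)" using vclos_play[OF ext.hyps(1)] by simp
  show ?case
  proof (cases "k \<le> length s")
    case True then show ?thesis using ext by simp
  next
    case False
    have "k \<le> length s + 2" using ext.prems by simp
    then have "k = length s + 2" using False ext.prems es by presburger
    then show ?thesis using vclos.ext[OF ext.hyps] by simp
  qed
qed

lemma O_move_parity: "play A s \<Longrightarrow> i < length s \<Longrightarrow> O_move A (omv (s!i)) \<longleftrightarrow> even i"
proof (induction i)
  case 0
  have j: "justified A s" using play_parts(1)[OF 0(1)] .
  have "apar A (omv (s!0)) = None" using justified_nth(2)[OF j 0(2)] by (auto split: if_splits)
  then have "has_depth A (omv (s!0)) 0" by (rule has_depth.root)
  then show ?case unfolding O_move_def by auto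
next
  case (Suc i)
  then have "O_move A (omv (s!i)) \<noteq> O_move A (omv (s!Suc i))" using play_parts(2)[OF Suc(2)] by blast
  then show ?case using Suc by auto
qed

lemma preview_snoc_P:
  assumes "\<not> O_move A (omv b)"
  shows "preview A (t@[b]) =
    map (\<lambda>i. reidx (pvaux (length t) A t (length t) @ [length t]) (t!i)) (pvaux (length t) A t (length t))
    @ [reidx (pvaux (length t) A t (length t) @ [length t]) b]"
proof -
  let ?J = "pvaux (length t) A t (length t)"
  have c: "pvaux (length t) A (t@[b]) (length t) = ?J"
    by (rule pvaux_cong) (simp add: nth_append)
  have p: "pvaux (length (t@[b])) A (t@[b]) (length (t@[b])) = ?J @ [length t]"
    using assms c by simp
  have "i \<in> set ?J \<Longrightarrow> (t@[b])!i = t!i" for i using pvaux_bound[of i "length t" A t "length t"] by (simp add: nth_append)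
  then show ?thesis unfolding preview_def p subseq_at_def by simp
qed

lemma det_core:
  assumes vf: "view_function A \<sigma>"
    and pb: "play A (t@[b])" and pd: "play A (t@[d])"
    and vb: "view_of A (t@[b]) \<in> \<sigma>" and vd: "view_of A (t@[d]) \<in> \<sigma>"
    and nb: "\<not> O_move A (omv b)" and nd: "\<not> O_move A (omv d)"
  shows "b = d"
proof -
  define J where "J = pvaux (length t) A t (length t)"
  define I where "I = J @ [length t]"
  define P0 where "P0 = map (\<lambda>i. reidx I (t!i)) J"
  define \<zeta> where "\<zeta> = view_ren (oidx A P0)"
  have oi: "\<not> O_move A (omv x) \<Longrightarrow> oidx A (P0 @ [reidx I x]) = oidx A P0" for x
    by (simp add: oidx_def oinsts_def)
  have VV: "\<not> O_move A (omv x) \<Longrightarrow> view_of A (t@[x]) = oren_seq \<zeta> P0 @ [(reidx I x)\<lparr>oins := map (oren \<zeta>) (oins x)\<rparr>]" for x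
    unfolding view_of_def using preview_snoc_P[of A x t] oi[of x]
    by (simp add: P0_def I_def J_def \<zeta>_def oren_seq_def)
  define yb where "yb = (reidx I b)\<lparr>oins := map (oren \<zeta>) (oins b)\<rparr>"
  define yd where "yd = (reidx I d)\<lparr>oins := map (oren \<zeta>) (oins d)\<rparr>"
  have "oren_seq \<zeta> P0 @ [yb] \<in> \<sigma>" "oren_seq \<zeta> P0 @ [yd] \<in> \<sigma>"
    using VV[OF nb] VV[OF nd] vb vd unfolding yb_def yd_def by simp_all
  then have ybd: "yb = yd" using vf unfolding view_function_def by blast
  have isv: "is_view A (oren_seq \<zeta> P0 @ [yb])"
    using vf \<open>oren_seq \<zeta> P0 @ [yb] \<in> \<sigma>\<close> unfolding view_function_def by blast
  then have pV: "play A (oren_seq \<zeta> P0 @ [yb])" unfolding is_view_def by blast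
  let ?L = "length (oren_seq \<zeta> P0)"
  have L: "?L < length (oren_seq \<zeta> P0 @ [yb])" by simp
  have VL: "(oren_seq \<zeta> P0 @ [yb]) ! ?L = yb" by (rule nth_append_length)
  have mv: "omv b = omv d" using arg_cong[OF ybd, of omv] unfolding yb_def yd_def by simp
  have ol: "olp (reidx I b) = olp (reidx I d)" using arg_cong[OF ybd, of olp] unfolding yb_def yd_def by simp
  have olb: "olp yb = olp (reidx I b)" by (simp add: yb_def)
  have omb: "omp yb = map (rp I) (omp b)" by (simp add: yb_def)
  have omd: "omp yd = map (rp I) (omp d)" by (simp add: yd_def)
  have omvb: "omv yb = omv b" by (simp add: yb_def)
  have ins: "oins b = oins d"
  proof -
    have "map (oren \<zeta>) (oins b) = map (oren \<zeta>) (oins d)" using arg_cong[OF ybd, of oins] unfolding yb_def yd_def by simp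
    moreover have "inj (oren \<zeta>)" using view_ren_inj[of "oidx A P0"] unfolding \<zeta>_def
      by (meson injI oren_inj)
    ultimately show ?thesis by (simp add: inj_map_eq_map)
  qed
  have jb: "justified A (t@[b])" using play_parts(1)[OF pb] .
  have jd: "justified A (t@[d])" using play_parts(1)[OF pd] .
  have Kb: "length t < length (t@[b])" "length t < length (t@[d])" by simp_all
  have lp: "olp b = olp d"
  proof (cases "apar A (omv b) = None")
    case True
    then show ?thesis using justified_nth(2)[OF jb Kb(1)] justified_nth(2)[OF jd Kb(2)] mv by simp
  next
    case False
    then obtain j1 where j1: "olp b = Some j1" using justified_nth(2)[OF jb Kb(1)] by auto
    obtain j2 where j2: "olp d = Some j2" using justified_nth(2)[OF jd Kb(2)] False mv by auto
    have "apar A (omv yb) \<noteq> None" using False omvb by simp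
    then obtain j where "olp yb = Some j"
      using justified_nth(2)[OF play_parts(1)[OF pV] L] VL by (auto split: if_splits)
    then have a: "j1 \<in> set I" "j2 \<in> set I" "pos I j1 = pos I j2"
      using ol olb j1 j2 by (auto split: if_splits)
    then show ?thesis using j1 j2 pos_nth by metis
  qed
  have mp: "omp b = omp d"
  proof -
    have e: "map (rp I) (omp b) = map (rp I) (omp d)" using ybd omb omd by simp
    have nn: "\<forall>p\<in>set (omp yb). p \<noteq> None"
      using play_parts(4)[OF pV] L VL nb omvb by metis
    have s1: "set (omp yb) = rp I ` set (omp b)" "set (omp yb) = rp I ` set (omp d)"
      using omb e by (simp, metis list.set_map) (metis omb e list.set_map)
    have good: "p \<in> set (omp b) \<union> set (omp d) \<Longrightarrow> \<exists>j l. p = Some (j, l) \<and> j \<in> set I" for p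
    proof -
      assume p: "p \<in> set (omp b) \<union> set (omp d)"
      then have "rp I p \<noteq> None" using nn s1 by blast
      then show ?thesis unfolding rp_def by (auto split: option.splits if_splits)
    qed
    have "inj_on (rp I) (set (omp b) \<union> set (omp d))"
    proof (rule inj_onI)
      fix p q assume "p \<in> set (omp b) \<union> set (omp d)" "q \<in> set (omp b) \<union> set (omp d)" "rp I p = rp I q"
      then obtain j1 l1 j2 l2 where "p = Some (j1, l1)" "j1 \<in> set I" "q = Some (j2, l2)" "j2 \<in> set I"
        "rp I p = rp I q" using good by blast
      note pq = this
      have "pos I j1 = pos I j2" "l1 = l2" using pq by (simp_all add: rp_def)
      then show "p = q" using pq pos_nth[of j1 I] pos_nth[of j2 I] by metis
    qed
    then show ?thesis using map_inj_on[OF e] by blast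
  qed
  show ?thesis using mv ins lp mp by (intro occ.equality) simp_all
qed

lemma vclos_det:
  assumes vf: "view_function A \<sigma>" and m: "s @ [m] \<in> vclos A \<sigma>" and n: "s @ [n] \<in> vclos A \<sigma>"
  shows "m = n"
proof -
  from m obtain s1 a b where e1: "s @ [m] = s1 @ [a, b]" and h1: "s1 \<in> vclos A \<sigma>" "play A (s1 @ [a, b])"
      "view_of A (s1 @ [a, b]) \<in> \<sigma>"
    by (cases rule: vclos.cases) auto
  from n obtain s2 c d where e2: "s @ [n] = s2 @ [c, d]" and h2: "s2 \<in> vclos A \<sigma>" "play A (s2 @ [c, d])"
      "view_of A (s2 @ [c, d]) \<in> \<sigma>"
    by (cases rule: vclos.cases) auto
  have "s @ [m] = (s1 @ [a]) @ [b]" using e1 by simp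
  then have e1': "s = s1 @ [a]" "m = b" by simp_all
  have "s @ [n] = (s2 @ [c]) @ [d]" using e2 by simp
  then have e2': "s = s2 @ [c]" "n = d" by simp_all
  have ev1: "even (length s1)" using vclos_play[OF h1(1)] by simp
  have ev2: "even (length s2)" using vclos_play[OF h2(1)] by simp
  have pb: "play A (s @ [b])" using h1(2) e1' by simp
  have pd: "play A (s @ [d])" using h2(2) e2' by simp
  have ls: "odd (length s)" using e1' ev1 by simp
  have nb: "\<not> O_move A (omv b)"
    using O_move_parity[OF pb, of "length s"] ls by simp
  have nd: "\<not> O_move A (omv d)"
    using O_move_parity[OF pd, of "length s"] ls by simp
  have vb: "view_of A (s @ [b]) \<in> \<sigma>" using h1(3) e1' by simp
  have vd: "view_of A (s @ [d]) \<in> \<sigma>" using h2(3) e2' by simp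
  have "b = d" by (rule det_core[OF vf pb pd vb vd nb nd])
  then show ?thesis using e1' e2' by simp
qed

lemma vclos_uniform:
  assumes ar: "arena A" and vf: "view_function A \<sigma>" and z: "inj z"
  shows "s \<in> vclos A \<sigma> \<Longrightarrow> oren_seq z s \<in> vclos A \<sigma>"
proof (induction rule: vclos.induct)
  case empty then show ?case by (simp add: vclos.empty)
next
  case (ext s m n)
  have e: "oren_seq z (s @ [m, n]) = oren_seq z s @ [m\<lparr>oins := map (oren z) (oins m)\<rparr>, n\<lparr>oins := map (oren z) (oins n)\<rparr>]"
    by simp
  have p: "play A (oren_seq z (s @ [m, n]))" using play_oren[OF ar ext.hyps(2) z] .
  have v: "view_of A (oren_seq z (s @ [m, n])) \<in> \<sigma>"
    using view_of_oren[OF vf play_parts(1)[OF ext.hyps(2)] ext.hyps(3) z] ext.hyps(3) by simp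
  show ?case unfolding e by (rule vclos.ext[OF ext.IH]) (use p v e in simp_all)
qed

theorem mainTheorem7:
  fixes A :: "'m arena" and \<sigma> :: "'m occ list set"
  assumes "arena A" and "view_function A \<sigma>"
  shows "strategy A (vclos A \<sigma>)"
  unfolding strategy_def
proof (intro conjI allI ballI impI)
  show "vclos A \<sigma> \<noteq> {}" using vclos.empty by blast
next
  fix s assume "s \<in> vclos A \<sigma>" then show "play A s" using vclos_play by blast
next
  fix s assume "s \<in> vclos A \<sigma>" then show "even (length s)" using vclos_play by blast
next
  fix s k assume "s \<in> vclos A \<sigma>" "even k \<and> k \<le> length s" then show "take k s \<in> vclos A \<sigma>"
    using vclos_take by blast
next
  fix s m n assume "s @ [m] \<in> vclos A \<sigma> \<and> s @ [n] \<in> vclos A \<sigma>" then show "m = n"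
    using vclos_det[OF assms(2)] by blast
next
  fix z :: "nat \<Rightarrow> nat" and s assume "inj z \<and> s \<in> vclos A \<sigma>" then show "oren_seq z s \<in> vclos A \<sigma>"
    using vclos_uniform[OF assms] by blast
qed

end
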